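(* For any positive integer $k$, in $\mathfrak{h}^1_t[[u]]$, $$S_t\left(\frac{1}{1-z_ku}\right)\ast\frac{1}{1+z_ku}=\frac{1}{1-\sum_{i=2}^\infty t^{i-2}(t-1)z_{ik}u^i}.$$
   Context: $t,u$ are commuting variables. $\mathfrak{h}_t=\mathbb{Q}[t]\langle x,y\rangle$ ($1$ = empty word), $\mathfrak{h}^1_t=\mathbb{Q}[t]+\mathfrak{h}_ty$, $z_k=x^{k-1}y$. For $X$ without constant term, $\frac{1}{1-X}=\sum_{n\ge0}X^n$ with concatenation powers; in particular $\frac1{1\mp z_ku}=\sum_n(\pm1)^nz_k^nu^n$. $\sigma_t$ is the algebra automorphism with $\sigma_t(x)=x,\sigma_t(y)=tx+y$ and $S_t$ is the $\mathbb{Q}[t]$-linear map with $S_t(1)=1$, $S_t(wa)=\sigma_t(w)a$ for words $w$ and letters $a$. The harmonic product $\ast$ on $\mathfrak{h}^1_t$ is the $\mathbb{Q}[t]$-bilinear product with $1\ast w=w\ast1=w$ and $z_kw_1\ast z_lw_2=z_k(w_1\ast z_lw_2)+z_l(z_kw_1\ast w_2)+z_{k+l}(w_1\ast w_2)$ for words $w_1,w_2\in\mathfrak{h}^1_t$. Everything extends coefficientwise to power series in $u$. *)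

theory Defs
  imports "HOL-Computational_Algebra.Polynomial"
begin

datatype letter = Lx | Ly

type_synonym word = "letter list"

(* Elements of h_t = Q[t]<x,y>: coefficient functions word => Q[t]
   (all elements occurring below have finite support). *)
type_synonym ht = "word \<Rightarrow> rat poly"

(* Elements of h_t[[u]]: the n-th entry is the coefficient of u^n. *)
type_synonym hts = "nat \<Rightarrow> ht"

definition tvar :: "rat poly" where "tvar = [:0, 1:]"

definition wsingle :: "word \<Rightarrow> rat poly \<Rightarrow> ht" where
  "wsingle w c = (\<lambda>v. if v = w then c else 0)"

definition zw :: "nat \<Rightarrow> word" where
  "zw k = replicate (k - 1) Lx @ [Ly]"

(* left multiplication by a letter *)
definition pre :: "letter \<Rightarrow> ht \<Rightarrow> ht" where
  "pre a f = (\<lambda>v. case v of [] \<Rightarrow> 0 | b # v' \<Rightarrow> if b = a then f v' else 0)"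

(* right multiplication by a letter *)
definition post :: "letter \<Rightarrow> ht \<Rightarrow> ht" where
  "post a f = (\<lambda>v. if v \<noteq> [] \<and> last v = a then f (butlast v) else 0)"

definition lin :: "(word \<Rightarrow> ht) \<Rightarrow> ht \<Rightarrow> ht" where
  "lin T f = (\<lambda>v. \<Sum>w\<in>{w. f w \<noteq> 0}. f w * T w v)"

definition bil :: "(word \<Rightarrow> word \<Rightarrow> ht) \<Rightarrow> ht \<Rightarrow> ht \<Rightarrow> ht" where
  "bil B f g = (\<lambda>v. \<Sum>p\<in>{p. f (fst p) \<noteq> 0 \<and> g (snd p) \<noteq> 0}.
                        f (fst p) * g (snd p) * B (fst p) (snd p) v)"

(* the algebra automorphism sigma_t on words: x \<mapsto> x, y \<mapsto> t x + y *)
fun sigma_w :: "word \<Rightarrow> ht" where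
  "sigma_w [] = wsingle [] 1"
| "sigma_w (Lx # w) = pre Lx (sigma_w w)"
| "sigma_w (Ly # w) = (\<lambda>v. tvar * pre Lx (sigma_w w) v + pre Ly (sigma_w w) v)"

definition S_w :: "word \<Rightarrow> ht" where
  "S_w w = (if w = [] then wsingle [] 1 else post (last w) (sigma_w (butlast w)))"

definition S_t :: "ht \<Rightarrow> ht" where
  "S_t f = lin S_w f"

(* Harmonic product.  A word of h^1 is z_{k1}...z_{kn}; we decode it into
   the index list [k1,...,kn], form the quasi-shuffle of index lists, and
   encode back. *)
fun dec_aux :: "nat \<Rightarrow> word \<Rightarrow> nat list" where
  "dec_aux c [] = []"
| "dec_aux c (Lx # w) = dec_aux (Suc c) w"
| "dec_aux c (Ly # w) = Suc c # dec_aux 0 w"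

definition dec :: "word \<Rightarrow> nat list" where "dec w = dec_aux 0 w"

definition in_h1 :: "word \<Rightarrow> bool" where
  "in_h1 w \<longleftrightarrow> w = [] \<or> last w = Ly"

definition npre :: "nat \<Rightarrow> (nat list \<Rightarrow> rat poly) \<Rightarrow> (nat list \<Rightarrow> rat poly)" where
  "npre k f = (\<lambda>v. case v of [] \<Rightarrow> 0 | j # v' \<Rightarrow> if j = k then f v' else 0)"

function stuffle :: "nat list \<Rightarrow> nat list \<Rightarrow> (nat list \<Rightarrow> rat poly)" where
  "stuffle [] b = (\<lambda>v. if v = b then 1 else 0)"
| "stuffle (k # a) [] = (\<lambda>v. if v = k # a then 1 else 0)"
| "stuffle (k # a) (l # b) =
     (\<lambda>v. npre k (stuffle a (l # b)) v + npre l (stuffle (k # a) b) v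
          + npre (k + l) (stuffle a b) v)"
  by pat_completeness auto
termination by (relation "measure (\<lambda>(a, b). length a + length b)") auto

definition harm_w :: "word \<Rightarrow> word \<Rightarrow> ht" where
  "harm_w w1 w2 = (\<lambda>v. if in_h1 v then stuffle (dec w1) (dec w2) (dec v) else 0)"

definition harm :: "ht \<Rightarrow> ht \<Rightarrow> ht" where
  "harm f g = bil harm_w f g"

definition conc :: "ht \<Rightarrow> ht \<Rightarrow> ht" where
  "conc f g = bil (\<lambda>w1 w2. wsingle (w1 @ w2) 1) f g"

definition S_ts :: "hts \<Rightarrow> hts" where
  "S_ts F = (\<lambda>n. S_t (F n))"

definition harm_s :: "hts \<Rightarrow> hts \<Rightarrow> hts" where
  "harm_s F G = (\<lambda>n v. \<Sum>i\<le>n. harm (F i) (G (n - i)) v)"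

definition conc_s :: "hts \<Rightarrow> hts \<Rightarrow> hts" where
  "conc_s F G = (\<lambda>n v. \<Sum>i\<le>n. conc (F i) (G (n - i)) v)"

definition one_s :: hts where
  "one_s = (\<lambda>n. if n = 0 then wsingle [] 1 else (\<lambda>v. 0))"

fun spow :: "hts \<Rightarrow> nat \<Rightarrow> hts" where
  "spow X 0 = one_s"
| "spow X (Suc m) = conc_s X (spow X m)"

(* 1/(1-X) = sum_{m>=0} X^m, for X without constant term; the coefficient
   of u^n only receives contributions from m <= n. *)
definition geom :: "hts \<Rightarrow> hts" where
  "geom X = (\<lambda>n v. \<Sum>m\<le>n. spow X m n v)"

definition zu :: "rat poly \<Rightarrow> nat \<Rightarrow> hts" where
  "zu c k = (\<lambda>n. if n = 1 then wsingle (zw k) c else (\<lambda>v. 0))"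

definition Xrhs :: "nat \<Rightarrow> hts" where
  "Xrhs k = (\<lambda>i. if i \<ge> 2 then wsingle (zw (i * k)) (tvar ^ (i - 2) * (tvar - 1))
                 else (\<lambda>v. 0))"

end

theory Submission
  imports Defs
begin



definition wsupp :: "ht \<Rightarrow> word set" where "wsupp f = {w. f w \<noteq> 0}"

lemma finite_letter: "finite (UNIV :: letter set)"
proof -
  have "UNIV = {Lx, Ly}" using letter.exhaust by auto
  then show ?thesis by (metis finite.emptyI finite.insertI)
qed

lemma finite_len: "finite {w :: word. length w = N}"
  using finite_lists_length_eq[OF finite_letter, of N] by simp

lemma fin_supp_len: "(\<And>w. f w \<noteq> 0 \<Longrightarrow> length w = N) \<Longrightarrow> finite (wsupp f)"
  by (rule finite_subset[OF _ finite_len[of N]]) (auto simp: wsupp_def)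

lemma bil_sum:
  assumes "finite (wsupp f)" "finite (wsupp g)"
  shows "bil B f g v = (\<Sum>w1\<in>wsupp f. \<Sum>w2\<in>wsupp g. f w1 * g w2 * B w1 w2 v)"
proof -
  have "{p. f (fst p) \<noteq> 0 \<and> g (snd p) \<noteq> 0} = wsupp f \<times> wsupp g"
    by (auto simp: wsupp_def)
  then show ?thesis unfolding bil_def
    by (simp add: sum.cartesian_product split_def)
qed

lemma bil_sum':
  assumes "finite SF" "finite SG" "wsupp f \<subseteq> SF" "wsupp g \<subseteq> SG"
  shows "bil B f g v = (\<Sum>w1\<in>SF. \<Sum>w2\<in>SG. f w1 * g w2 * B w1 w2 v)"
proof -
  have ff: "finite (wsupp f)" "finite (wsupp g)" using assms finite_subset by auto
  have "(\<Sum>w1\<in>SF. \<Sum>w2\<in>SG. f w1 * g w2 * B w1 w2 v) = (\<Sum>w1\<in>wsupp f. \<Sum>w2\<in>SG. f w1 * g w2 * B w1 w2 v)"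
    by (rule sum.mono_neutral_right) (use assms in \<open>auto simp: wsupp_def\<close>)
  also have "\<dots> = (\<Sum>w1\<in>wsupp f. \<Sum>w2\<in>wsupp g. f w1 * g w2 * B w1 w2 v)"
    by (intro sum.cong refl sum.mono_neutral_right) (use assms in \<open>auto simp: wsupp_def\<close>)
  finally show ?thesis using bil_sum[OF ff] by simp
qed

lemma bil_nz: "bil B f g v \<noteq> 0 \<Longrightarrow> \<exists>w1 w2. f w1 \<noteq> 0 \<and> g w2 \<noteq> 0 \<and> B w1 w2 v \<noteq> 0"
proof -
  assume "bil B f g v \<noteq> 0"
  then obtain p where "f (fst p) * g (snd p) * B (fst p) (snd p) v \<noteq> 0"
    unfolding bil_def by (blast elim: sum.not_neutral_contains_not_neutral)
  then show ?thesis by (intro exI[of _ "fst p"] exI[of _ "snd p"]) auto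
qed

lemma conc_nz: "conc f g v \<noteq> 0 \<Longrightarrow> \<exists>w1 w2. f w1 \<noteq> 0 \<and> g w2 \<noteq> 0 \<and> v = w1 @ w2"
  unfolding conc_def by (drule bil_nz) (auto simp: wsingle_def split: if_splits)

lemma conc_zero1: "conc (\<lambda>_. 0) g = (\<lambda>_. 0)"
  by (auto simp: conc_def bil_def)

lemma conc_zero2: "conc f (\<lambda>_. 0) = (\<lambda>_. 0)"
  by (auto simp: conc_def bil_def)

lemma wsingle_0: "wsingle w 0 = (\<lambda>_. 0)"
  by (auto simp: wsingle_def)

lemma wsupp_wsingle: "c \<noteq> 0 \<Longrightarrow> wsupp (wsingle u c) = {u}"
  by (auto simp: wsupp_def wsingle_def)

lemma conc_wsingle:
  assumes "finite (wsupp g)"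
  shows "conc (wsingle u c) g v = (if (\<exists>w. v = u @ w) then c * g (drop (length u) v) else 0)"
proof (cases "c = 0")
  case True then show ?thesis by (simp add: wsingle_0 conc_zero1)
next
  case False
  have "conc (wsingle u c) g v = (\<Sum>w2\<in>wsupp g. c * g w2 * wsingle (u @ w2) 1 v)"
  proof -
    have "conc (wsingle u c) g v = (\<Sum>w1\<in>{u}. \<Sum>w2\<in>wsupp g. wsingle u c w1 * g w2 * wsingle (w1 @ w2) 1 v)"
      unfolding conc_def using assms False bil_sum[of "wsingle u c" g] by (simp add: wsupp_wsingle)
    then show ?thesis by (simp add: wsingle_def)
  qed
  also have "\<dots> = (\<Sum>w2\<in>wsupp g. if w2 = drop (length u) v \<and> (\<exists>w. v = u @ w) then c * g w2 else 0)"
    by (intro sum.cong refl) (auto simp: wsingle_def)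
  also have "\<dots> = (if (\<exists>w. v = u @ w) then c * g (drop (length u) v) else 0)"
    using assms by (auto simp: sum.delta wsupp_def)
  finally show ?thesis .
qed

lemma conc_ws_ws: "conc (wsingle u a) (wsingle w b) = wsingle (u @ w) (a * b)"
proof -
  have f: "finite (wsupp (wsingle w b))" by (auto simp: wsupp_def wsingle_def intro: finite_subset[of _ "{w}"])
  show ?thesis unfolding conc_wsingle[OF f] by (rule ext) (auto simp: wsingle_def)
qed




lemma zw_eq: "zw j = replicate (j - 1) Lx @ [Ly]" by (simp add: zw_def)

lemma zw_app: "zw j @ v = replicate (j - 1) Lx @ Ly # v" by (simp add: zw_def)

lemma length_zw: "j \<ge> 1 \<Longrightarrow> length (zw j) = j" by (simp add: zw_def)

lemma rep_eq: "(replicate p Lx @ Ly # w = replicate q Lx @ Ly # v) \<longleftrightarrow> (p = q \<and> w = v)"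
proof (induction p arbitrary: q)
  case 0 then show ?case by (cases q) auto
next
  case (Suc p) then show ?case by (cases q) auto
qed

lemma zw_app_eq: "a \<ge> 1 \<Longrightarrow> j \<ge> 1 \<Longrightarrow> (zw a @ w = zw j @ v) \<longleftrightarrow> (a = j \<and> w = v)"
  by (auto simp: zw_app rep_eq)

lemma zw_ne: "zw j @ v \<noteq> []" by (simp add: zw_def)

lemma in_h1_zw: "in_h1 (zw j @ v) \<longleftrightarrow> in_h1 v"
  by (auto simp: in_h1_def zw_def)

lemma h1_decomp: "in_h1 v \<Longrightarrow> v \<noteq> [] \<Longrightarrow> \<exists>j v'. j \<ge> 1 \<and> v = zw j @ v' \<and> in_h1 v'"
proof (induction v)
  case Nil then show ?case by simp
next
  case (Cons a v)
  show ?case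
  proof (cases a)
    case Ly
    then have "Ly # v = zw 1 @ v" by (simp add: zw_def)
    moreover have "in_h1 v" using Cons.prems by (cases v) (auto simp: in_h1_def)
    ultimately show ?thesis using Ly by blast
  next
    case Lx
    then have "v \<noteq> []" using Cons.prems by (auto simp: in_h1_def)
    moreover have "in_h1 v" using Cons.prems \<open>v \<noteq> []\<close> by (auto simp: in_h1_def)
    ultimately obtain j v' where "j \<ge> 1" "v = zw j @ v'" "in_h1 v'" using Cons.IH by blast
    then have "a # v = zw (Suc j) @ v'" using Lx by (cases j) (auto simp: zw_def)
    then show ?thesis using \<open>in_h1 v'\<close> by (intro exI[of _ "Suc j"]) auto
  qed
qed

lemma dec_aux_app: "dec_aux c (replicate p Lx @ Ly # w) = Suc (c + p) # dec_aux 0 w"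
  by (induction p arbitrary: c) auto

lemma dec_zw: "j \<ge> 1 \<Longrightarrow> dec (zw j @ w) = j # dec w"
  by (simp add: dec_def zw_app dec_aux_app)

lemma dec_aux_cons: "dec_aux c w = p # a \<Longrightarrow> \<exists>q w'. w = replicate q Lx @ Ly # w' \<and> p = Suc (c + q) \<and> a = dec_aux 0 w'"
proof (induction c w rule: dec_aux.induct)
  case (1 c) then show ?case by simp
next
  case (2 c w)
  then obtain q w' where "w = replicate q Lx @ Ly # w'" "p = Suc (Suc c + q)" "a = dec_aux 0 w'" by auto
  then show ?case by (intro exI[of _ "Suc q"] exI[of _ w']) auto
next
  case (3 c w) then show ?case by (intro exI[of _ 0] exI[of _ w]) auto
qed

lemma dec_cons: "dec w = p # a \<Longrightarrow> p \<ge> 1 \<and> (\<exists>w'. w = zw p @ w' \<and> dec w' = a)"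
  unfolding dec_def by (drule dec_aux_cons) (auto simp: zw_app)

lemma dec_aux_nil: "dec_aux c w = [] \<Longrightarrow> Ly \<notin> set w"
  by (induction c w rule: dec_aux.induct) auto

lemma dec_nil_h1: "dec w = [] \<Longrightarrow> in_h1 w \<Longrightarrow> w = []"
  unfolding dec_def in_h1_def by (metis dec_aux_nil last_in_set)

lemma dec_pos: "x \<in> set (dec w) \<Longrightarrow> x \<ge> 1"
proof -
  have "x \<in> set (dec_aux c w) \<Longrightarrow> x \<ge> 1" for c
    by (induction c w rule: dec_aux.induct) auto
  then show "x \<in> set (dec w) \<Longrightarrow> x \<ge> 1" unfolding dec_def by blast
qed

definition Zk :: "nat \<Rightarrow> nat \<Rightarrow> word" where "Zk k n = concat (replicate n (zw k))"

lemma Zk_0: "Zk k 0 = []" by (simp add: Zk_def)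
lemma Zk_Suc: "Zk k (Suc n) = zw k @ Zk k n" by (simp add: Zk_def)

lemma spow_zu: "spow (zu c k) m n = (if m = n then wsingle (Zk k m) (c ^ m) else (\<lambda>_. 0))"
proof (induction m arbitrary: n)
  case 0 then show ?case by (auto simp: one_s_def Zk_0)
next
  case (Suc m)
  have "spow (zu c k) (Suc m) n = (\<lambda>v. \<Sum>i\<le>n. conc (zu c k i) (spow (zu c k) m (n - i)) v)"
    by (simp add: conc_s_def)
  also have "\<dots> = (\<lambda>v. \<Sum>i\<le>n. if i = 1 then conc (wsingle (zw k) c) (spow (zu c k) m (n - 1)) v else 0)"
    by (intro ext sum.cong refl) (auto simp: zu_def conc_zero1)
  also have "\<dots> = (\<lambda>v. if 1 \<le> n then conc (wsingle (zw k) c) (spow (zu c k) m (n - 1)) v else 0)"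
    by (auto simp: sum.delta)
  also have "\<dots> = (if Suc m = n then wsingle (Zk k (Suc m)) (c ^ Suc m) else (\<lambda>_. 0))"
    by (cases n) (auto simp: Suc.IH conc_zero2 conc_ws_ws Zk_Suc)
  finally show ?case .
qed

lemma geom_zu: "geom (zu c k) n = wsingle (Zk k n) (c ^ n)"
proof (rule ext)
  fix v
  have "geom (zu c k) n v = (\<Sum>m\<le>n. if m = n then wsingle (Zk k n) (c ^ n) v else 0)"
    unfolding geom_def spow_zu by (intro sum.cong refl) auto
  then show "geom (zu c k) n v = wsingle (Zk k n) (c ^ n) v" by simp
qed

lemma S_t_wsingle: "S_t (wsingle w 1) = S_w w"
proof -
  have "{w'. wsingle w 1 w' \<noteq> 0} = {w}" by (auto simp: wsingle_def)
  then show ?thesis by (auto simp: S_t_def lin_def wsingle_def)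
qed




lemma pre_nz: "pre a F v \<noteq> 0 \<Longrightarrow> \<exists>v'. v = a # v' \<and> F v' \<noteq> 0"
  by (cases v) (auto simp: pre_def split: if_splits)

lemma pre_Cons: "pre a F (b # v) = (if b = a then F v else 0)"
  by (simp add: pre_def)

lemma pre_Nil: "pre a F [] = 0"
  by (simp add: pre_def)

lemma sigma_len: "sigma_w w v \<noteq> 0 \<Longrightarrow> length v = length w"
proof (induction w arbitrary: v rule: sigma_w.induct)
  case 1 then show ?case by (auto simp: wsingle_def split: if_splits)
next
  case (2 w) then show ?case by (auto dest!: pre_nz)
next
  case (3 w)
  then have "pre Lx (sigma_w w) v \<noteq> 0 \<or> pre Ly (sigma_w w) v \<noteq> 0" by auto
  then show ?case using 3 by (auto dest!: pre_nz)
qed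

lemma S_w_len: "S_w w v \<noteq> 0 \<Longrightarrow> length v = length w"
proof (cases "w = []")
  case True then show "S_w w v \<noteq> 0 \<Longrightarrow> ?thesis" by (auto simp: S_w_def wsingle_def split: if_splits)
next
  case False
  assume "S_w w v \<noteq> 0"
  then have "v \<noteq> []" "sigma_w (butlast w) (butlast v) \<noteq> 0"
    using False by (auto simp: S_w_def post_def split: if_splits)
  then have "length (butlast v) = length (butlast w)" by (rule_tac sigma_len) simp
  moreover have "length v > 0" "length w > 0" using False \<open>v \<noteq> []\<close> by simp_all
  ultimately show ?thesis by (simp del: length_greater_0_conv)
qed

lemma S_w_h1: "w \<noteq> [] \<Longrightarrow> last w = Ly \<Longrightarrow> S_w w v \<noteq> 0 \<Longrightarrow> in_h1 v"
  by (auto simp: S_w_def post_def in_h1_def split: if_splits)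

lemma post_pre: "post b (pre a F) = pre a (post b F)"
proof (rule ext)
  fix v show "post b (pre a F) v = pre a (post b F) v"
  proof (cases v)
    case Nil then show ?thesis by (simp add: post_def pre_def)
  next
    case (Cons c v')
    then show ?thesis by (cases "v' = []") (auto simp: post_def pre_def)
  qed
qed

lemma post_lin: "post b (\<lambda>v. t * F v + G v) = (\<lambda>v. t * post b F v + post b G v)"
  by (auto simp: post_def)

lemma SW_x: "w \<noteq> [] \<Longrightarrow> S_w (Lx # w) = pre Lx (S_w w)"
  by (simp add: S_w_def post_pre)

lemma SW_y: "w \<noteq> [] \<Longrightarrow> S_w (Ly # w) = (\<lambda>v. tvar * pre Lx (S_w w) v + pre Ly (S_w w) v)"
proof -
  assume w: "w \<noteq> []"
  have "S_w (Ly # w) = post (last w) (\<lambda>v. tvar * pre Lx (sigma_w (butlast w)) v + pre Ly (sigma_w (butlast w)) v)"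
    using w by (simp add: S_w_def)
  also have "\<dots> = (\<lambda>v. tvar * pre Lx (S_w w) v + pre Ly (S_w w) v)"
    using w by (simp add: post_lin post_pre S_w_def)
  finally show ?thesis .
qed

lemma SW_rep: "w \<noteq> [] \<Longrightarrow> S_w (replicate m Lx @ w) = (pre Lx ^^ m) (S_w w)"
  by (induction m) (auto simp: SW_x)

lemma pre_rep: "(pre Lx ^^ m) G (replicate p Lx @ Ly # v) = (if m \<le> p then G (replicate (p - m) Lx @ Ly # v) else 0)"
proof (induction m arbitrary: p)
  case 0 then show ?case by simp
next
  case (Suc m) then show ?case by (cases p) (auto simp: pre_Cons)
qed

lemma S_w_Ly: "S_w [Ly] = wsingle [Ly] 1"
  by (rule ext, case_tac x) (auto simp: S_w_def post_def wsingle_def split: if_splits)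




lemma S_w_Nil: "S_w [] = wsingle [] 1" by (simp add: S_w_def)

lemma Zk_ne: "m \<ge> 1 \<Longrightarrow> Zk k m \<noteq> []"
  by (cases m) (auto simp: Zk_Suc zw_def)

lemma AR:
  assumes k: "k \<ge> 1" and j: "j \<ge> 1"
  shows "S_w (Zk k (Suc m)) (zw j @ v) = (if j = k then S_w (Zk k m) v else 0)
           + (if k < j then tvar * S_w (Zk k m) (zw (j - k) @ v) else 0)"
proof -
  have Z: "Zk k (Suc m) = replicate (k - 1) Lx @ (Ly # Zk k m)" by (simp add: Zk_Suc zw_def)
  have "S_w (Zk k (Suc m)) (zw j @ v) = (pre Lx ^^ (k - 1)) (S_w (Ly # Zk k m)) (replicate (j - 1) Lx @ Ly # v)"
    by (simp add: Z SW_rep zw_app)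
  also have "\<dots> = (if k \<le> j then S_w (Ly # Zk k m) (replicate (j - k) Lx @ Ly # v) else 0)"
  proof -
    have "(k - 1 \<le> j - 1) = (k \<le> j)" "j - 1 - (k - 1) = j - k" using k j by auto
    then show ?thesis by (simp add: pre_rep)
  qed
  finally have L: "S_w (Zk k (Suc m)) (zw j @ v) = (if k \<le> j then S_w (Ly # Zk k m) (replicate (j - k) Lx @ Ly # v) else 0)" .
  show ?thesis
  proof (cases "m = 0")
    case True
    have "k < j \<Longrightarrow> replicate (j - k) Lx @ Ly # v \<noteq> [Ly]" by (cases "j - k") auto
    then show ?thesis unfolding L using k j True
      by (auto simp: Zk_0 S_w_Ly S_w_Nil wsingle_def zw_def)
  next
    case False
    then have ne: "Zk k m \<noteq> []" using Zk_ne by simp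
    show ?thesis
    proof (cases "k \<le> j")
      case False then show ?thesis unfolding L by simp
    next
      case True
      show ?thesis
      proof (cases "j = k")
        case True then show ?thesis unfolding L by (simp add: SW_y[OF ne] pre_Cons)
      next
        case False
        then have eq: "replicate (j - k) Lx @ Ly # v = Lx # (zw (j - k) @ v)"
          using \<open>k \<le> j\<close> by (cases "j - k") (auto simp: zw_def)
        have "S_w (Ly # Zk k m) (replicate (j - k) Lx @ Ly # v) = tvar * S_w (Zk k m) (zw (j-k) @ v)"
          unfolding eq SW_y[OF ne] pre_Cons by simp
        then show ?thesis unfolding L using False \<open>k \<le> j\<close> by simp
      qed
    qed
  qed
qed

lemma A0: "S_w (Zk k 0) (zw j @ v) = 0"
  by (simp add: Zk_0 S_w_Nil wsingle_def zw_def)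

lemma A_mult:
  assumes k: "k \<ge> 1" and i: "i \<ge> 1"
  shows "S_w (Zk k n) (zw (i * k) @ v) = (if i \<le> n then tvar ^ (i - 1) * S_w (Zk k (n - i)) v else 0)"
  using i
proof (induction i arbitrary: n rule: nat_induct_at_least)
  case base
  show ?case
  proof (cases n)
    case 0 then show ?thesis by (simp add: A0)
  next
    case (Suc m) then show ?thesis using k by (simp add: AR)
  qed
next
  case (Suc i)
  show ?case
  proof (cases n)
    case 0 then show ?thesis by (simp add: A0)
  next
    case (Suc m)
    have "S_w (Zk k n) (zw (Suc i * k) @ v) = tvar * S_w (Zk k m) (zw (i * k) @ v)"
      using k Suc \<open>i \<ge> 1\<close> by (simp add: AR)
    also have "\<dots> = (if i \<le> m then tvar ^ i * S_w (Zk k (m - i)) v else 0)"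
      using Suc.IH \<open>i \<ge> 1\<close> by (cases i) (auto simp: mult.assoc)
    finally show ?thesis using \<open>n = Suc m\<close> by simp
  qed
qed

lemma A_nonmult:
  assumes k: "k \<ge> 1"
  shows "j \<ge> 1 \<Longrightarrow> \<not> k dvd j \<Longrightarrow> S_w (Zk k n) (zw j @ v) = 0"
proof (induction j arbitrary: n rule: less_induct)
  case (less j)
  show ?case
  proof (cases n)
    case 0 then show ?thesis by (simp add: A0)
  next
    case (Suc m)
    have "j \<noteq> k" using less.prems by auto
    moreover have "k < j \<Longrightarrow> S_w (Zk k m) (zw (j - k) @ v) = 0"
    proof -
      assume "k < j"
      have "\<not> k dvd (j - k)"
      proof
        assume "k dvd (j - k)"
        then have "k dvd (j - k) + k" by simp
        then show False using \<open>k < j\<close> less.prems by simp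
      qed
      then show ?thesis using less.IH[of "j - k" m] \<open>k < j\<close> k by auto
    qed
    ultimately show ?thesis using Suc k less.prems by (simp add: AR)
  qed
qed

lemma A_res:
  assumes k: "k \<ge> 1" and j: "j \<ge> 1"
  shows "S_w (Zk k n) (zw j @ v) = (if k dvd j \<and> j div k \<le> n then tvar ^ (j div k - 1) * S_w (Zk k (n - j div k)) v else 0)"
proof (cases "k dvd j")
  case True
  then obtain i where ji: "j = i * k" by (metis dvdE mult.commute)
  then have "i \<ge> 1" using j by (cases i) auto
  then show ?thesis using A_mult[OF k \<open>i \<ge> 1\<close>] ji k by simp
next
  case False then show ?thesis using A_nonmult[OF k j] by simp
qed




definition Xg :: "nat \<Rightarrow> (nat \<Rightarrow> rat poly) \<Rightarrow> hts" where
  "Xg k c = (\<lambda>i. wsingle (zw (i * k)) (c i))"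

lemma sum_dvd_delta:
  fixes k j n :: nat
  assumes k: "k \<ge> 1"
  shows "(\<Sum>i\<le>n. if i * k = j then f i else 0) = (if k dvd j \<and> j div k \<le> n then f (j div k) else (0::'a::comm_monoid_add))"
proof -
  have e: "(i * k = j) = (i = j div k \<and> k dvd j)" for i
  proof
    assume "i * k = j" then show "i = j div k \<and> k dvd j" using k by auto
  next
    assume "i = j div k \<and> k dvd j" then show "i * k = j" by simp
  qed
  show ?thesis unfolding e by (cases "k dvd j") (simp_all add: sum.delta)
qed

lemma div_ge1: "k \<ge> 1 \<Longrightarrow> j \<ge> 1 \<Longrightarrow> k dvd j \<Longrightarrow> j div k \<ge> (1::nat)"
  by (metis One_nat_def dvd_div_eq_0_iff less_one not_less not_one_le_zero)

context
  fixes k :: nat and c :: "nat \<Rightarrow> rat poly"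
  assumes k: "k \<ge> 1" and c0: "c 0 = 0"
begin

lemma X0: "Xg k c 0 = (\<lambda>_. 0)"
  by (simp add: Xg_def c0 wsingle_0)

lemma spow_nz: "spow (Xg k c) m n v \<noteq> 0 \<Longrightarrow> length v = n * k \<and> in_h1 v"
proof (induction m arbitrary: n v)
  case 0 then show ?case by (auto simp: one_s_def wsingle_def in_h1_def split: if_splits)
next
  case (Suc m)
  then obtain i where i: "i \<le> n" "conc (Xg k c i) (spow (Xg k c) m (n - i)) v \<noteq> 0"
    by (auto simp: conc_s_def elim: sum.not_neutral_contains_not_neutral)
  then obtain w1 w2 where w: "Xg k c i w1 \<noteq> 0" "spow (Xg k c) m (n - i) w2 \<noteq> 0" "v = w1 @ w2"
    by (blast dest: conc_nz)
  then have w1: "w1 = zw (i * k)" "c i \<noteq> 0" by (auto simp: Xg_def wsingle_def split: if_splits)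
  then have "i \<ge> 1" using c0 by (cases i) auto
  then have "i * k \<ge> 1" using k by simp
  have IH: "length w2 = (n - i) * k \<and> in_h1 w2" using Suc.IH w(2) by blast
  have "length v = i * k + (n - i) * k" using w(3) w1 IH length_zw[OF \<open>i * k \<ge> 1\<close>] by simp
  also have "\<dots> = n * k" using i(1) by (simp add: add_mult_distrib[symmetric])
  finally show ?case using IH w(3) w1 in_h1_zw by simp
qed

lemma spow_fin: "finite (wsupp (spow (Xg k c) m n))"
  by (rule fin_supp_len[of _ "n * k"]) (simp add: spow_nz)

lemma spow_big: "n < m \<Longrightarrow> spow (Xg k c) m n = (\<lambda>_. 0)"
proof (induction m arbitrary: n)
  case 0 then show ?case by simp
next
  case (Suc m)
  have "conc (Xg k c i) (spow (Xg k c) m (n - i)) = (\<lambda>_. 0)" if "i \<le> n" for i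
  proof (cases i)
    case 0 then show ?thesis by (simp add: X0 conc_zero1)
  next
    case (Suc i') then have "n - i < m" using Suc.prems that by simp
    then show ?thesis by (simp add: Suc.IH conc_zero2)
  qed
  then show ?case by (auto simp: conc_s_def intro!: ext sum.neutral)
qed

lemma conc_X_res:
  assumes j: "j \<ge> 1" and fin: "finite (wsupp G)"
  shows "conc (Xg k c i) G (zw j @ v) = (if i * k = j then c i * G v else 0)"
proof (cases i)
  case 0 then show ?thesis using j by (simp add: X0 conc_zero1)
next
  case (Suc i')
  then have ik: "i * k \<ge> 1" using k by simp
  have e: "(\<exists>w. zw j @ v = zw (i * k) @ w) \<longleftrightarrow> i * k = j" using zw_app_eq[OF ik j] by metis
  show ?thesis unfolding Xg_def conc_wsingle[OF fin] e using length_zw[OF j] by auto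
qed

lemma spow_res:
  assumes j: "j \<ge> 1"
  shows "spow (Xg k c) (Suc m) n (zw j @ v) = (if k dvd j \<and> j div k \<le> n then c (j div k) * spow (Xg k c) m (n - j div k) v else 0)"
proof -
  have "spow (Xg k c) (Suc m) n (zw j @ v) = (\<Sum>i\<le>n. conc (Xg k c i) (spow (Xg k c) m (n - i)) (zw j @ v))"
    by (simp add: conc_s_def)
  also have "\<dots> = (\<Sum>i\<le>n. if i * k = j then c i * spow (Xg k c) m (n - i) v else 0)"
    by (intro sum.cong refl conc_X_res j spow_fin)
  also have "\<dots> = (if k dvd j \<and> j div k \<le> n then c (j div k) * spow (Xg k c) m (n - j div k) v else 0)"
    by (rule sum_dvd_delta[OF k])
  finally show ?thesis .
qed


lemma geom_nz: "geom (Xg k c) n v \<noteq> 0 \<Longrightarrow> length v = n * k \<and> in_h1 v"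
  unfolding geom_def by (blast elim: sum.not_neutral_contains_not_neutral dest: spow_nz)

lemma geom_fin: "finite (wsupp (geom (Xg k c) n))"
  by (rule fin_supp_len[of _ "n * k"]) (simp add: geom_nz)

lemma geom_Nil: "geom (Xg k c) n [] = (if n = 0 then 1 else 0)"
proof (cases n)
  case 0 then show ?thesis by (simp add: geom_def one_s_def wsingle_def)
next
  case (Suc n')
  have "geom (Xg k c) n [] = 0"
  proof (rule ccontr)
    assume "geom (Xg k c) n [] \<noteq> 0"
    then have "length ([]::word) = n * k" using geom_nz by blast
    then show False using Suc k by simp
  qed
  then show ?thesis using Suc by simp
qed

lemma geom_res:
  assumes j: "j \<ge> 1"
  shows "geom (Xg k c) n (zw j @ v) = (if k dvd j \<and> j div k \<le> n then c (j div k) * geom (Xg k c) (n - j div k) v else 0)"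
proof (cases n)
  case 0
  have "k dvd j \<Longrightarrow> j div k \<ge> 1" using div_ge1[OF k j] by simp
  then show ?thesis using 0 by (auto simp: geom_def one_s_def wsingle_def zw_def)
next
  case (Suc n')
  have "geom (Xg k c) n (zw j @ v) = spow (Xg k c) 0 n (zw j @ v) + (\<Sum>m\<le>n'. spow (Xg k c) (Suc m) n (zw j @ v))"
    unfolding geom_def Suc by (rule sum.atMost_Suc_shift)
  also have "\<dots> = (\<Sum>m\<le>n'. if k dvd j \<and> j div k \<le> n then c (j div k) * spow (Xg k c) m (n - j div k) v else 0)"
    by (simp only: spow_res[OF j]) (simp add: Suc one_s_def wsingle_def zw_ne)
  also have "\<dots> = (if k dvd j \<and> j div k \<le> n then c (j div k) * geom (Xg k c) (n - j div k) v else 0)"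
  proof (cases "k dvd j \<and> j div k \<le> n")
    case True
    then have M: "j div k \<ge> 1" using div_ge1[OF k j] by simp
    have "(\<Sum>m\<le>n'. spow (Xg k c) m (n - j div k) v) = (\<Sum>m\<le>n - j div k. spow (Xg k c) m (n - j div k) v)"
      by (rule sum.mono_neutral_right) (use M Suc in \<open>auto simp: spow_big\<close>)
    then show ?thesis using True by (simp add: geom_def sum_distrib_left[symmetric])
  next
    case False show ?thesis by (simp only: if_not_P[OF False] if_False sum.neutral_const)
  qed
  finally show ?thesis .
qed

end



definition res :: "nat \<Rightarrow> ht \<Rightarrow> ht" where "res j F = (\<lambda>w. F (zw j @ w))"

lemma inj_zwapp: "inj (\<lambda>w. zw j @ w)" by (auto simp: inj_def)

lemma wsupp_res: "wsupp (res j F) = (\<lambda>w. zw j @ w) -` wsupp F"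
  by (auto simp: wsupp_def res_def)

lemma res_fin: "finite (wsupp F) \<Longrightarrow> finite (wsupp (res j F))"
  unfolding wsupp_res by (rule finite_vimageI[OF _ inj_zwapp])

lemma harm_nonh1: "\<not> in_h1 v \<Longrightarrow> harm F G v = 0"
  by (simp add: harm_def bil_def harm_w_def)

lemma harm_scale_l:
  assumes "finite (wsupp F)" "finite (wsupp G)"
  shows "harm (\<lambda>w. c * F w) G v = c * harm F G v"
proof -
  have s: "wsupp (\<lambda>w. c * F w) \<subseteq> wsupp F" by (auto simp: wsupp_def)
  show ?thesis unfolding harm_def
    using bil_sum'[OF assms(1,2) s order.refl] bil_sum'[OF assms(1,2) order.refl order.refl]
    by (simp add: sum_distrib_left mult.assoc)
qed

lemma harm_scale_r:
  assumes "finite (wsupp F)" "finite (wsupp G)"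
  shows "harm F (\<lambda>w. c * G w) v = c * harm F G v"
proof -
  have s: "wsupp (\<lambda>w. c * G w) \<subseteq> wsupp G" by (auto simp: wsupp_def)
  show ?thesis unfolding harm_def
    using bil_sum'[OF assms(1,2) order.refl s] bil_sum'[OF assms(1,2) order.refl order.refl]
    by (simp add: sum_distrib_left algebra_simps)
qed

lemma stuffle_Nil: "stuffle a b [] = (if a = [] \<and> b = [] then 1 else 0)"
  by (cases a; cases b) (auto simp: npre_def)

lemma harm_w_Nil: "in_h1 w1 \<Longrightarrow> in_h1 w2 \<Longrightarrow> harm_w w1 w2 [] = (if w1 = [] \<and> w2 = [] then 1 else 0)"
  by (auto simp: harm_w_def in_h1_def dec_def stuffle_Nil dest: dec_nil_h1[unfolded dec_def in_h1_def])

lemma harm_Nil: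
  assumes "finite (wsupp F)" "finite (wsupp G)"
    and hF: "\<And>w. F w \<noteq> 0 \<Longrightarrow> in_h1 w" and hG: "\<And>w. G w \<noteq> 0 \<Longrightarrow> in_h1 w"
  shows "harm F G [] = F [] * G []"
proof -
  have "harm F G [] = (\<Sum>w1\<in>wsupp F. \<Sum>w2\<in>wsupp G. F w1 * G w2 * harm_w w1 w2 [])"
    unfolding harm_def using assms(1,2) by (rule bil_sum)
  also have "\<dots> = (\<Sum>w1\<in>wsupp F. if w1 = [] then (\<Sum>w2\<in>wsupp G. if w2 = [] then F w1 * G w2 else 0) else 0)"
  proof (intro sum.cong refl)
    fix w1 assume "w1 \<in> wsupp F"
    then have "in_h1 w1" using hF by (auto simp: wsupp_def)
    then show "(\<Sum>w2\<in>wsupp G. F w1 * G w2 * harm_w w1 w2 []) =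
       (if w1 = [] then (\<Sum>w2\<in>wsupp G. if w2 = [] then F w1 * G w2 else 0) else 0)"
      using hG by (auto simp: harm_w_Nil wsupp_def intro!: sum.neutral sum.cong)
  qed
  also have "\<dots> = F [] * G []" using assms(1,2) by (auto simp: sum.delta wsupp_def)
  finally show ?thesis .
qed


lemma sum_pair_delta:
  fixes p q j :: nat
  assumes "p \<ge> 1" "q \<ge> 1"
  shows "(\<Sum>x\<in>{1..<j}. if p = x then (if q = j - x then S else 0) else 0) = (if p + q = j then S else (0::'a::comm_monoid_add))"
proof -
  have "(\<Sum>x\<in>{1..<j}. if p = x then (if q = j - x then S else 0) else 0) = (if p \<in> {1..<j} then (if q = j - p then S else 0) else 0)"
    by (rule sum.delta'[OF finite_atLeastLessThan])
  also have "\<dots> = (if p + q = j then S else 0)" using assms by auto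
  finally show ?thesis .
qed

lemma stuffle_Nil2: "stuffle a [] = (\<lambda>v. if v = a then 1 else 0)"
  by (cases a) auto

lemma stuffle_cons:
  assumes "\<forall>x\<in>set a. x \<ge> 1" "\<forall>x\<in>set b. x \<ge> 1"
  shows "stuffle a b (j # L) =
     (if a \<noteq> [] \<and> hd a = j then stuffle (tl a) b L else 0)
   + (if b \<noteq> [] \<and> hd b = j then stuffle a (tl b) L else 0)
   + (\<Sum>p\<in>{1..<j}. if a \<noteq> [] \<and> hd a = p then (if b \<noteq> [] \<and> hd b = j - p then stuffle (tl a) (tl b) L else 0) else 0)"
proof (cases a)
  case Nil
  then show ?thesis by (cases b) auto
next
  case (Cons p a')
  show ?thesis
  proof (cases b)
    case Nil
    then show ?thesis using Cons by (auto simp: stuffle_Nil2)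
  next
    case (Cons q b')
    have "p \<ge> 1" "q \<ge> 1" using assms Cons \<open>a = p # a'\<close> by auto
    then show ?thesis using Cons \<open>a = p # a'\<close>
      by (simp add: npre_def sum_pair_delta)
  qed
qed

lemma dec_if:
  assumes p: "p \<ge> 1"
  shows "(if dec w \<noteq> [] \<and> hd (dec w) = p then X (tl (dec w)) else 0) = (if \<exists>w'. w = zw p @ w' then X (dec (drop p w)) else 0)"
proof (cases "\<exists>w'. w = zw p @ w'")
  case True
  then obtain w' where w: "w = zw p @ w'" by blast
  then show ?thesis using p by (simp add: dec_zw length_zw)
next
  case False
  have "\<not> (dec w \<noteq> [] \<and> hd (dec w) = p)"
  proof
    assume "dec w \<noteq> [] \<and> hd (dec w) = p"
    then have "dec w = p # tl (dec w)" by (cases "dec w") auto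
    then show False using dec_cons False by blast
  qed
  then show ?thesis using False by auto
qed

lemma HW:
  assumes j: "j \<ge> 1" and h: "in_h1 v"
  shows "harm_w w1 w2 (zw j @ v) =
     (if \<exists>w'. w1 = zw j @ w' then harm_w (drop j w1) w2 v else 0)
   + (if \<exists>w'. w2 = zw j @ w' then harm_w w1 (drop j w2) v else 0)
   + (\<Sum>p\<in>{1..<j}. if \<exists>w'. w1 = zw p @ w' then (if \<exists>w'. w2 = zw (j - p) @ w' then harm_w (drop p w1) (drop (j - p) w2) v else 0) else 0)"
proof -
  have L: "harm_w w1 w2 (zw j @ v) = stuffle (dec w1) (dec w2) (j # dec v)"
    using h j by (simp add: harm_w_def in_h1_zw dec_zw)
  have pos: "\<forall>x\<in>set (dec w1). x \<ge> 1" "\<forall>x\<in>set (dec w2). x \<ge> 1" using dec_pos by auto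
  have hw: "harm_w u1 u2 v = stuffle (dec u1) (dec u2) (dec v)" for u1 u2 using h by (simp add: harm_w_def)
  have e1: "(if dec w1 \<noteq> [] \<and> hd (dec w1) = j then stuffle (tl (dec w1)) (dec w2) (dec v) else 0)
      = (if \<exists>w'. w1 = zw j @ w' then harm_w (drop j w1) w2 v else 0)"
    unfolding hw by (rule dec_if[OF j])
  have e2: "(if dec w2 \<noteq> [] \<and> hd (dec w2) = j then stuffle (dec w1) (tl (dec w2)) (dec v) else 0)
      = (if \<exists>w'. w2 = zw j @ w' then harm_w w1 (drop j w2) v else 0)"
    unfolding hw by (rule dec_if[OF j])
  have e3: "(if dec w1 \<noteq> [] \<and> hd (dec w1) = p then (if dec w2 \<noteq> [] \<and> hd (dec w2) = j - p then stuffle (tl (dec w1)) (tl (dec w2)) (dec v) else 0) else 0)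
     = (if \<exists>w'. w1 = zw p @ w' then (if \<exists>w'. w2 = zw (j - p) @ w' then harm_w (drop p w1) (drop (j - p) w2) v else 0) else 0)"
    if "p \<in> {1..<j}" for p
  proof -
    have p: "p \<ge> 1" "j - p \<ge> 1" using that by auto
    show ?thesis
      using dec_if[OF p(1), of w1 "\<lambda>a. if dec w2 \<noteq> [] \<and> hd (dec w2) = j - p then stuffle a (tl (dec w2)) (dec v) else 0"]
        dec_if[OF p(2), of w2 "\<lambda>b. stuffle (dec (drop p w1)) b (dec v)"]
      unfolding hw by simp
  qed
  have e3s: "(\<Sum>p\<in>{1..<j}. if dec w1 \<noteq> [] \<and> hd (dec w1) = p then (if dec w2 \<noteq> [] \<and> hd (dec w2) = j - p then stuffle (tl (dec w1)) (tl (dec w2)) (dec v) else 0) else 0)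
     = (\<Sum>p\<in>{1..<j}. if \<exists>w'. w1 = zw p @ w' then (if \<exists>w'. w2 = zw (j - p) @ w' then harm_w (drop p w1) (drop (j - p) w2) v else 0) else 0)"
    by (rule sum.cong[OF refl e3])
  show ?thesis unfolding L stuffle_cons[OF pos] e1 e2 e3s by (rule refl)
qed

lemma RI:
  assumes "finite S"
  shows "(\<Sum>w\<in>S. if \<exists>w'. w = zw j @ w' then \<psi> w else 0) = (\<Sum>w'\<in>{w'. zw j @ w' \<in> S}. \<psi> (zw j @ w'))"
proof -
  have "(\<Sum>w\<in>S. if \<exists>w'. w = zw j @ w' then \<psi> w else 0) = (\<Sum>w\<in>{w\<in>S. \<exists>w'. w = zw j @ w'}. \<psi> w)"
    using assms by (simp add: sum.inter_filter)
  also have "{w\<in>S. \<exists>w'. w = zw j @ w'} = (\<lambda>w'. zw j @ w') ` {w'. zw j @ w' \<in> S}" by auto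
  also have "(\<Sum>w\<in>\<dots>. \<psi> w) = (\<Sum>w'\<in>{w'. zw j @ w' \<in> S}. \<psi> (zw j @ w'))"
    by (rule sum.reindex_cong[OF inj_on_subset[OF inj_zwapp]]) auto
  finally show ?thesis .
qed


lemma drop_zw: "p \<ge> 1 \<Longrightarrow> drop p (zw p @ w) = w"
  by (simp add: zw_def)

lemma drop_zw': "0 < p \<Longrightarrow> drop p (zw p @ w) = w"
  by (simp add: zw_def)

lemma length_zw': "0 < p \<Longrightarrow> length (zw p) = p"
  by (simp add: zw_def)

lemma vimage_zw: "{w'. zw j @ w' \<in> wsupp F} = wsupp (res j F)"
  by (auto simp: wsupp_res)

lemma harm_res:
  assumes fF: "finite (wsupp F)" and fG: "finite (wsupp G)" and j: "j \<ge> 1"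
  shows "harm F G (zw j @ v) = harm (res j F) G v + harm F (res j G) v
           + (\<Sum>p\<in>{1..<j}. harm (res p F) (res (j - p) G) v)"
proof (cases "in_h1 v")
  case False
  then show ?thesis by (simp add: harm_nonh1 in_h1_zw)
next
  case h: True
  let ?SF = "wsupp F" and ?SG = "wsupp G"
  define P1 where "P1 w1 w2 = F w1 * G w2 * (if \<exists>w'. w1 = zw j @ w' then harm_w (drop j w1) w2 v else 0)" for w1 w2
  define P2 where "P2 w1 w2 = F w1 * G w2 * (if \<exists>w'. w2 = zw j @ w' then harm_w w1 (drop j w2) v else 0)" for w1 w2
  define P3 where "P3 p w1 w2 = F w1 * G w2 * (if \<exists>w'. w1 = zw p @ w' then (if \<exists>w'. w2 = zw (j - p) @ w' then harm_w (drop p w1) (drop (j - p) w2) v else 0) else 0)" for p w1 w2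
  have "harm F G (zw j @ v) = (\<Sum>w1\<in>?SF. \<Sum>w2\<in>?SG. F w1 * G w2 * harm_w w1 w2 (zw j @ v))"
    unfolding harm_def by (rule bil_sum[OF fF fG])
  also have "\<dots> = (\<Sum>w1\<in>?SF. \<Sum>w2\<in>?SG. P1 w1 w2 + P2 w1 w2 + (\<Sum>p\<in>{1..<j}. P3 p w1 w2))"
    by (intro sum.cong refl) (simp add: HW[OF j h] P1_def P2_def P3_def distrib_left sum_distrib_left)
  also have "\<dots> = (\<Sum>w1\<in>?SF. \<Sum>w2\<in>?SG. P1 w1 w2) + (\<Sum>w1\<in>?SF. \<Sum>w2\<in>?SG. P2 w1 w2)
      + (\<Sum>p\<in>{1..<j}. \<Sum>w1\<in>?SF. \<Sum>w2\<in>?SG. P3 p w1 w2)"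
  proof -
    have sw: "(\<Sum>w1\<in>?SF. \<Sum>w2\<in>?SG. \<Sum>p\<in>{1..<j}. P3 p w1 w2) = (\<Sum>p\<in>{1..<j}. \<Sum>w1\<in>?SF. \<Sum>w2\<in>?SG. P3 p w1 w2)"
    proof -
      have "(\<Sum>w1\<in>?SF. \<Sum>w2\<in>?SG. \<Sum>p\<in>{1..<j}. P3 p w1 w2) = (\<Sum>w1\<in>?SF. \<Sum>p\<in>{1..<j}. \<Sum>w2\<in>?SG. P3 p w1 w2)"
        by (intro sum.cong refl) (rule sum.swap)
      also have "\<dots> = (\<Sum>p\<in>{1..<j}. \<Sum>w1\<in>?SF. \<Sum>w2\<in>?SG. P3 p w1 w2)"
        by (rule sum.swap)
      finally show ?thesis .
    qed
    show ?thesis by (simp only: sum.distrib sw)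
  qed
  also have "(\<Sum>w1\<in>?SF. \<Sum>w2\<in>?SG. P1 w1 w2) = harm (res j F) G v"
  proof -
    have "(\<Sum>w1\<in>?SF. \<Sum>w2\<in>?SG. P1 w1 w2) = (\<Sum>w1\<in>?SF. if \<exists>w'. w1 = zw j @ w' then (\<Sum>w2\<in>?SG. F w1 * G w2 * harm_w (drop j w1) w2 v) else 0)"
      by (intro sum.cong refl) (simp add: P1_def)
    also have "\<dots> = (\<Sum>w1\<in>wsupp (res j F). \<Sum>w2\<in>?SG. res j F w1 * G w2 * harm_w w1 w2 v)"
      unfolding RI[OF fF, of j "\<lambda>w1. \<Sum>w2\<in>?SG. F w1 * G w2 * harm_w (drop j w1) w2 v"]
      using j by (simp add: vimage_zw length_zw res_def)
    also have "\<dots> = harm (res j F) G v"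
      unfolding harm_def by (rule bil_sum[OF res_fin[OF fF] fG, symmetric])
    finally show ?thesis .
  qed
  also have "(\<Sum>w1\<in>?SF. \<Sum>w2\<in>?SG. P2 w1 w2) = harm F (res j G) v"
  proof -
    have "(\<Sum>w1\<in>?SF. \<Sum>w2\<in>?SG. P2 w1 w2) = (\<Sum>w1\<in>?SF. \<Sum>w2\<in>?SG. if \<exists>w'. w2 = zw j @ w' then F w1 * G w2 * harm_w w1 (drop j w2) v else 0)"
      by (intro sum.cong refl) (simp add: P2_def)
    also have "\<dots> = (\<Sum>w1\<in>?SF. \<Sum>w2\<in>wsupp (res j G). F w1 * res j G w2 * harm_w w1 w2 v)"
      unfolding RI[OF fG, of j "\<lambda>w2. F w1 * G w2 * harm_w w1 (drop j w2) v" for w1]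
      using j by (simp add: vimage_zw length_zw res_def)
    also have "\<dots> = harm F (res j G) v"
      unfolding harm_def by (rule bil_sum[OF fF res_fin[OF fG], symmetric])
    finally show ?thesis .
  qed
  also have "(\<Sum>p\<in>{1..<j}. \<Sum>w1\<in>?SF. \<Sum>w2\<in>?SG. P3 p w1 w2) = (\<Sum>p\<in>{1..<j}. harm (res p F) (res (j - p) G) v)"
  proof (rule sum.cong[OF refl])
    fix p assume "p \<in> {1..<j}"
    then have p: "p \<ge> 1" "j - p \<ge> 1" by auto
    have "(\<Sum>w1\<in>?SF. \<Sum>w2\<in>?SG. P3 p w1 w2) = (\<Sum>w1\<in>?SF. if \<exists>w'. w1 = zw p @ w' then (\<Sum>w2\<in>?SG. if \<exists>w'. w2 = zw (j - p) @ w' then F w1 * G w2 * harm_w (drop p w1) (drop (j - p) w2) v else 0) else 0)"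
      by (intro sum.cong refl) (auto simp: P3_def intro!: sum.cong)
    also have "\<dots> = (\<Sum>w1\<in>wsupp (res p F). \<Sum>w2\<in>?SG. if \<exists>w'. w2 = zw (j - p) @ w' then F (zw p @ w1) * G w2 * harm_w w1 (drop (j - p) w2) v else 0)"
      unfolding RI[OF fF, of p "\<lambda>w1. \<Sum>w2\<in>?SG. if \<exists>w'. w2 = zw (j - p) @ w' then F w1 * G w2 * harm_w (drop p w1) (drop (j - p) w2) v else 0"]
      using p by (simp add: vimage_zw) (intro sum.cong refl, simp add: drop_zw' length_zw')
    also have "\<dots> = (\<Sum>w1\<in>wsupp (res p F). \<Sum>w2\<in>wsupp (res (j - p) G). F (zw p @ w1) * G (zw (j - p) @ w2) * harm_w w1 w2 v)"
      unfolding RI[OF fG, of "j - p" "\<lambda>w2. F (zw p @ w1) * G w2 * harm_w w1 (drop (j - p) w2) v" for w1]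
      using p by (simp add: vimage_zw) (intro sum.cong refl, simp add: drop_zw' length_zw')
    also have "\<dots> = harm (res p F) (res (j - p) G) v"
      unfolding harm_def bil_sum[OF res_fin[OF fF] res_fin[OF fG]] by (simp add: res_def)
    finally show "(\<Sum>w1\<in>?SF. \<Sum>w2\<in>?SG. P3 p w1 w2) = harm (res p F) (res (j - p) G) v" .
  qed
  finally show ?thesis .
qed




definition Aw :: "nat \<Rightarrow> nat \<Rightarrow> ht" where "Aw k i = S_w (Zk k i)"
definition Bw :: "nat \<Rightarrow> nat \<Rightarrow> ht" where "Bw k i = wsingle (Zk k i) ((-1) ^ i)"
definition Cw :: "nat \<Rightarrow> nat \<Rightarrow> ht" where "Cw k n v = (\<Sum>i\<le>n. harm (Aw k i) (Bw k (n - i)) v)"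
definition cR :: "nat \<Rightarrow> rat poly" where "cR i = (if 2 \<le> i then tvar ^ (i - 2) * (tvar - 1) else 0)"

lemma zw_nonempty[simp]: "zw j \<noteq> []" by (simp add: zw_def)

lemma Zk_h1: "in_h1 (Zk k i)"
  by (induction i) (auto simp: Zk_0 Zk_Suc in_h1_zw, simp add: in_h1_def)

lemma fA: "finite (wsupp (Aw k i))"
  by (rule fin_supp_len[of _ "length (Zk k i)"]) (simp add: Aw_def S_w_len)

lemma fB: "finite (wsupp (Bw k i))"
  by (rule fin_supp_len[of _ "length (Zk k i)"]) (simp add: Bw_def wsingle_def split: if_splits)

lemma hA: "k \<ge> 1 \<Longrightarrow> Aw k i w \<noteq> 0 \<Longrightarrow> in_h1 w"
proof (cases i)
  case 0 then show "Aw k i w \<noteq> 0 \<Longrightarrow> in_h1 w" by (auto simp: Aw_def Zk_0 S_w_Nil wsingle_def in_h1_def split: if_splits)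
next
  case (Suc m)
  assume k: "k \<ge> 1" and nz: "Aw k i w \<noteq> 0"
  have ne: "Zk k i \<noteq> []" using Suc by (simp add: Zk_ne)
  then have "last (Zk k i) = Ly" using Zk_h1[of k i] by (simp add: in_h1_def)
  then show ?thesis using S_w_h1[OF ne] nz by (simp add: Aw_def)
qed

lemma hB: "Bw k i w \<noteq> 0 \<Longrightarrow> in_h1 w"
  using Zk_h1 by (auto simp: Bw_def wsingle_def split: if_splits)

lemma A_Nil: "k \<ge> 1 \<Longrightarrow> Aw k i [] = (if i = 0 then 1 else 0)"
proof (cases i)
  case 0 then show ?thesis by (simp add: Aw_def Zk_0 S_w_Nil wsingle_def)
next
  case (Suc m)
  assume k: "k \<ge> 1"
  have "Zk k i \<noteq> []" using Suc by (simp add: Zk_ne)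
  then have "S_w (Zk k i) [] = 0" using S_w_len[of "Zk k i" "[]"] by auto
  then show ?thesis using Suc by (simp add: Aw_def)
qed

lemma B_Nil: "k \<ge> 1 \<Longrightarrow> Bw k i [] = (if i = 0 then 1 else 0)"
  by (cases i) (auto simp: Bw_def Zk_0 Zk_Suc wsingle_def zw_ne)

lemma resA: "k \<ge> 1 \<Longrightarrow> j \<ge> 1 \<Longrightarrow> res j (Aw k i) = (\<lambda>w. (if k dvd j \<and> j div k \<le> i then tvar ^ (j div k - 1) else 0) * Aw k (i - j div k) w)"
  by (rule ext) (simp add: res_def Aw_def A_res)

lemma resB: "k \<ge> 1 \<Longrightarrow> j \<ge> 1 \<Longrightarrow> res j (Bw k i) = (\<lambda>w. (if j = k \<and> 1 \<le> i then -1 else 0) * Bw k (i - 1) w)"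
proof (rule ext)
  fix w assume k: "k \<ge> 1" and j: "j \<ge> 1"
  show "res j (Bw k i) w = (if j = k \<and> 1 \<le> i then -1 else 0) * Bw k (i - 1) w"
  proof (cases i)
    case 0 then show ?thesis by (simp add: res_def Bw_def Zk_0 wsingle_def zw_ne[symmetric])
  next
    case (Suc m)
    have "(Zk k i = zw j @ w) = (k = j \<and> Zk k m = w)" using Suc zw_app_eq[OF k j] by (simp add: Zk_Suc)
    then show ?thesis using Suc by (auto simp: res_def Bw_def wsingle_def)
  qed
qed

lemma harm_scale2:
  assumes "finite (wsupp F)" "finite (wsupp G)"
  shows "harm (\<lambda>w. a * F w) (\<lambda>w. b * G w) v = a * b * harm F G v"
proof -
  have "finite (wsupp (\<lambda>w. b * G w))"
    by (rule finite_subset[OF _ assms(2)]) (auto simp: wsupp_def)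
  then show ?thesis using harm_scale_l[OF assms(1)] harm_scale_r[OF assms] by simp
qed


lemma SH:
  fixes a b n :: nat
  shows "(\<Sum>i\<le>n. if a \<le> i \<and> b \<le> n - i then f (i - a) (n - i - b) else 0)
       = (if a + b \<le> n then (\<Sum>i\<le>n - a - b. f i (n - a - b - i)) else (0::'c::comm_monoid_add))"
proof (cases "a + b \<le> n")
  case True
  have "(\<Sum>i\<le>n. if a \<le> i \<and> b \<le> n - i then f (i - a) (n - i - b) else 0)
      = (\<Sum>i\<in>{x\<in>{..n}. a \<le> x \<and> b \<le> n - x}. f (i - a) (n - i - b))"
    by (rule sum.inter_filter[symmetric]) simp
  also have "{x\<in>{..n}. a \<le> x \<and> b \<le> n - x} = {0 + a..(n - a - b) + a}" using True by auto
  also have "(\<Sum>i\<in>{0 + a..(n - a - b) + a}. f (i - a) (n - i - b)) = (\<Sum>i\<in>{0..n - a - b}. f (i + a - a) (n - (i + a) - b))"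
    by (rule sum.shift_bounds_cl_nat_ivl)
  also have "\<dots> = (\<Sum>i\<le>n - a - b. f i (n - a - b - i))"
    unfolding atLeast0AtMost by (intro sum.cong refl) (simp add: algebra_simps)
  finally show ?thesis using True by simp
next
  case False
  then show ?thesis by (auto intro!: sum.neutral)
qed


lemma C_expand:
  assumes k: "k \<ge> 1" and j: "j \<ge> 1"
  shows "Cw k n (zw j @ v) = (\<Sum>i\<le>n.
      (if k dvd j \<and> j div k \<le> i then tvar ^ (j div k - 1) else 0) * harm (Aw k (i - j div k)) (Bw k (n - i)) v
    + (if j = k \<and> 1 \<le> n - i then -1 else 0) * harm (Aw k i) (Bw k (n - i - 1)) v
    + (\<Sum>p\<in>{1..<j}. (if k dvd p \<and> p div k \<le> i then tvar ^ (p div k - 1) else 0)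
          * (if j - p = k \<and> 1 \<le> n - i then -1 else 0) * harm (Aw k (i - p div k)) (Bw k (n - i - 1)) v))"
  unfolding Cw_def
proof (intro sum.cong refl)
  fix i assume "i \<in> {..n}"
  have t3: "harm (res p (Aw k i)) (res (j - p) (Bw k (n - i))) v =
     (if k dvd p \<and> p div k \<le> i then tvar ^ (p div k - 1) else 0)
          * (if j - p = k \<and> 1 \<le> n - i then -1 else 0) * harm (Aw k (i - p div k)) (Bw k (n - i - 1)) v"
    if "p \<in> {1..<j}" for p
  proof -
    have p: "p \<ge> 1" "j - p \<ge> 1" using that by auto
    show ?thesis unfolding resA[OF k p(1)] resB[OF k p(2)] harm_scale2[OF fA fB] ..
  qed
  have s3: "(\<Sum>p\<in>{1..<j}. harm (res p (Aw k i)) (res (j - p) (Bw k (n - i))) v) =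
     (\<Sum>p\<in>{1..<j}. (if k dvd p \<and> p div k \<le> i then tvar ^ (p div k - 1) else 0)
          * (if j - p = k \<and> 1 \<le> n - i then -1 else 0) * harm (Aw k (i - p div k)) (Bw k (n - i - 1)) v)"
    by (rule sum.cong[OF refl t3])
  show "harm (Aw k i) (Bw k (n - i)) (zw j @ v) =
      (if k dvd j \<and> j div k \<le> i then tvar ^ (j div k - 1) else 0) * harm (Aw k (i - j div k)) (Bw k (n - i)) v
    + (if j = k \<and> 1 \<le> n - i then -1 else 0) * harm (Aw k i) (Bw k (n - i - 1)) v
    + (\<Sum>p\<in>{1..<j}. (if k dvd p \<and> p div k \<le> i then tvar ^ (p div k - 1) else 0)
          * (if j - p = k \<and> 1 \<le> n - i then -1 else 0) * harm (Aw k (i - p div k)) (Bw k (n - i - 1)) v)"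
    unfolding harm_res[OF fA fB j] s3 resA[OF k j] resB[OF k j]
      harm_scale_l[OF fA fB] harm_scale_r[OF fA fB] ..
qed


lemma C_res:
  assumes k: "k \<ge> 1" and j: "j \<ge> 1"
  shows "Cw k n (zw j @ v) = (if k dvd j \<and> j div k \<le> n then cR (j div k) * Cw k (n - j div k) v else 0)"
proof (cases "k dvd j")
  case False
  have "Cw k n (zw j @ v) = 0"
    unfolding C_expand[OF k j]
  proof (intro sum.neutral ballI)
    fix i assume "i \<in> {..n}"
    have "j \<noteq> k" using False by auto
    moreover have "(\<Sum>p\<in>{1..<j}. (if k dvd p \<and> p div k \<le> i then tvar ^ (p div k - 1) else 0)
          * (if j - p = k \<and> 1 \<le> n - i then -1 else 0) * harm (Aw k (i - p div k)) (Bw k (n - i - 1)) v) = 0"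
    proof (intro sum.neutral ballI)
      fix p assume "p \<in> {1..<j}"
      have "\<not> (k dvd p \<and> j - p = k)"
      proof
        assume "k dvd p \<and> j - p = k"
        then have "k dvd p + k" "p + k = j" using \<open>p \<in> {1..<j}\<close> by auto
        then show False using False by simp
      qed
      then show "(if k dvd p \<and> p div k \<le> i then tvar ^ (p div k - 1) else 0)
          * (if j - p = k \<and> 1 \<le> n - i then -1 else 0) * harm (Aw k (i - p div k)) (Bw k (n - i - 1)) v = 0"
        by auto
    qed
    ultimately show "(if k dvd j \<and> j div k \<le> i then tvar ^ (j div k - 1) else 0) * harm (Aw k (i - j div k)) (Bw k (n - i)) v
    + (if j = k \<and> 1 \<le> n - i then -1 else 0) * harm (Aw k i) (Bw k (n - i - 1)) v
    + (\<Sum>p\<in>{1..<j}. (if k dvd p \<and> p div k \<le> i then tvar ^ (p div k - 1) else 0)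
          * (if j - p = k \<and> 1 \<le> n - i then -1 else 0) * harm (Aw k (i - p div k)) (Bw k (n - i - 1)) v) = 0"
      using False by simp
  qed
  then show ?thesis using False by simp
next
  case True
  then obtain M where jM: "j = M * k" by (metis dvdE mult.commute)
  then have M1: "M \<ge> 1" using j by (cases M) auto
  have jdiv: "j div k = M" using jM k by simp
  let ?H = "\<lambda>x y. harm (Aw k x) (Bw k y) v"
  have S1: "(\<Sum>i\<le>n. (if k dvd j \<and> j div k \<le> i then tvar ^ (j div k - 1) else 0) * harm (Aw k (i - j div k)) (Bw k (n - i)) v)
      = (if M \<le> n then tvar ^ (M - 1) * Cw k (n - M) v else 0)"
  proof -
    have "(\<Sum>i\<le>n. (if k dvd j \<and> j div k \<le> i then tvar ^ (j div k - 1) else 0) * harm (Aw k (i - j div k)) (Bw k (n - i)) v)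
       = (\<Sum>i\<le>n. if M \<le> i \<and> 0 \<le> n - i then (\<lambda>x y. tvar ^ (M - 1) * ?H x y) (i - M) (n - i - 0) else 0)"
      using True jdiv by (intro sum.cong refl) auto
    also have "\<dots> = (if M \<le> n then tvar ^ (M - 1) * Cw k (n - M) v else 0)"
      by (subst SH[of M 0 n "\<lambda>x y. tvar ^ (M - 1) * ?H x y"]) (simp add: Cw_def sum_distrib_left)
    finally show ?thesis .
  qed
  have S2: "(\<Sum>i\<le>n. (if j = k \<and> 1 \<le> n - i then -1 else 0) * harm (Aw k i) (Bw k (n - i - 1)) v)
      = (if j = k \<and> 1 \<le> n then - Cw k (n - 1) v else 0)"
  proof (cases "j = k")
    case True
    have "(\<Sum>i\<le>n. (if j = k \<and> 1 \<le> n - i then -1 else 0) * harm (Aw k i) (Bw k (n - i - 1)) v)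
       = (\<Sum>i\<le>n. if 0 \<le> i \<and> 1 \<le> n - i then (\<lambda>x y. - ?H x y) (i - 0) (n - i - 1) else 0)"
      using True by (intro sum.cong refl) auto
    also have "\<dots> = (if j = k \<and> 1 \<le> n then - Cw k (n - 1) v else 0)"
      by (subst SH[of 0 1 n "\<lambda>x y. - ?H x y"]) (use True in \<open>simp add: Cw_def sum_negf\<close>)
    finally show ?thesis .
  qed simp
  have S3: "(\<Sum>i\<le>n. \<Sum>p\<in>{1..<j}. (if k dvd p \<and> p div k \<le> i then tvar ^ (p div k - 1) else 0)
          * (if j - p = k \<and> 1 \<le> n - i then -1 else 0) * harm (Aw k (i - p div k)) (Bw k (n - i - 1)) v)
      = (if 2 \<le> M \<and> M \<le> n then - (tvar ^ (M - 2) * Cw k (n - M) v) else 0)"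
  proof -
    have inner: "(\<Sum>p\<in>{1..<j}. (if k dvd p \<and> p div k \<le> i then tvar ^ (p div k - 1) else 0)
          * (if j - p = k \<and> 1 \<le> n - i then -1 else 0) * harm (Aw k (i - p div k)) (Bw k (n - i - 1)) v)
       = (if 2 \<le> M \<and> M - 1 \<le> i \<and> 1 \<le> n - i then - (tvar ^ (M - 2) * harm (Aw k (i - (M - 1))) (Bw k (n - i - 1)) v) else 0)"
      for i
    proof -
      have "(\<Sum>p\<in>{1..<j}. (if k dvd p \<and> p div k \<le> i then tvar ^ (p div k - 1) else 0)
          * (if j - p = k \<and> 1 \<le> n - i then -1 else 0) * harm (Aw k (i - p div k)) (Bw k (n - i - 1)) v)
        = (\<Sum>p\<in>{1..<j}. if j - k = p then (if k dvd p \<and> p div k \<le> i then tvar ^ (p div k - 1) else 0)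
          * (if 1 \<le> n - i then -1 else 0) * harm (Aw k (i - p div k)) (Bw k (n - i - 1)) v else 0)"
        by (intro sum.cong refl) auto
      also have "\<dots> = (if j - k \<in> {1..<j} then (if k dvd (j - k) \<and> (j - k) div k \<le> i then tvar ^ ((j - k) div k - 1) else 0)
          * (if 1 \<le> n - i then -1 else 0) * harm (Aw k (i - (j - k) div k)) (Bw k (n - i - 1)) v else 0)"
        by (rule sum.delta'[OF finite_atLeastLessThan])
      also have "\<dots> = (if 2 \<le> M \<and> M - 1 \<le> i \<and> 1 \<le> n - i then - (tvar ^ (M - 2) * harm (Aw k (i - (M - 1))) (Bw k (n - i - 1)) v) else 0)"
      proof (cases "2 \<le> M")
        case True
        have jk: "j - k = (M - 1) * k" using jM by (simp add: diff_mult_distrib)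
        have "0 < M - 1" "0 < k" using True k by auto
        then have "0 < (M - 1) * k" by simp
        then have "j - k \<in> {1..<j}" using jk j k by auto
        moreover have "(j - k) div k = M - 1" using k by (simp add: jk)
        moreover have "M - 1 - 1 = M - 2" by simp
        ultimately show ?thesis using True jk by auto
      next
        case False
        then have "M = 1" using M1 by simp
        then have c1: "\<not> (j - k \<in> {1..<j})" using jM by simp
        have c2: "\<not> (2 \<le> M \<and> M - 1 \<le> i \<and> 1 \<le> n - i)" using False by simp
        show ?thesis unfolding if_not_P[OF c1] if_not_P[OF c2] ..
      qed
      finally show ?thesis .
    qed
    have "(\<Sum>i\<le>n. \<Sum>p\<in>{1..<j}. (if k dvd p \<and> p div k \<le> i then tvar ^ (p div k - 1) else 0)
          * (if j - p = k \<and> 1 \<le> n - i then -1 else 0) * harm (Aw k (i - p div k)) (Bw k (n - i - 1)) v)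
       = (\<Sum>i\<le>n. if 2 \<le> M \<and> M - 1 \<le> i \<and> 1 \<le> n - i then - (tvar ^ (M - 2) * harm (Aw k (i - (M - 1))) (Bw k (n - i - 1)) v) else 0)"
      unfolding inner ..
    also have "\<dots> = (if 2 \<le> M \<and> M \<le> n then - (tvar ^ (M - 2) * Cw k (n - M) v) else 0)"
    proof (cases "2 \<le> M")
      case True
      have "(\<Sum>i\<le>n. if 2 \<le> M \<and> M - 1 \<le> i \<and> 1 \<le> n - i then - (tvar ^ (M - 2) * harm (Aw k (i - (M - 1))) (Bw k (n - i - 1)) v) else 0)
        = (\<Sum>i\<le>n. if M - 1 \<le> i \<and> 1 \<le> n - i then (\<lambda>x y. - (tvar ^ (M - 2) * ?H x y)) (i - (M - 1)) (n - i - 1) else 0)"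
        using True by simp
      also have "\<dots> = (if M \<le> n then - (tvar ^ (M - 2) * Cw k (n - M) v) else 0)"
        by (subst SH[of "M - 1" 1 n "\<lambda>x y. - (tvar ^ (M - 2) * ?H x y)"]) (use True in \<open>simp add: Cw_def sum_distrib_left sum_negf\<close>)
      finally show ?thesis using True by simp
    qed simp
    finally show ?thesis .
  qed
  have "Cw k n (zw j @ v) = (if M \<le> n then tvar ^ (M - 1) * Cw k (n - M) v else 0)
      + (if j = k \<and> 1 \<le> n then - Cw k (n - 1) v else 0)
      + (if 2 \<le> M \<and> M \<le> n then - (tvar ^ (M - 2) * Cw k (n - M) v) else 0)"
    unfolding C_expand[OF k j] sum.distrib S1 S2 S3 ..
  also have "\<dots> = (if k dvd j \<and> j div k \<le> n then cR (j div k) * Cw k (n - j div k) v else 0)"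
  proof (cases "M = 1")
    case True
    then show ?thesis using jM jdiv by (simp add: cR_def)
  next
    case False
    then have M2: "2 \<le> M" using M1 by simp
    then have "j \<noteq> k" using jM k by auto
    have "tvar ^ (M - 1) = tvar ^ (M - 2) * tvar" using M2
      by (metis Suc_diff_Suc Suc_1 diff_Suc_1 less_le_trans one_less_numeral_iff power_Suc2 semiring_norm(76) Suc_le_lessD)
    then show ?thesis using M2 \<open>j \<noteq> k\<close> jdiv True by (simp add: cR_def algebra_simps)
  qed
  finally show ?thesis .
qed




lemma cR0: "cR 0 = 0" by (simp add: cR_def)

lemma Xrhs_Xg: "Xrhs k = Xg k cR"
  by (intro ext) (simp add: Xrhs_def Xg_def cR_def wsingle_def)

lemma main_eq:
  assumes k: "k \<ge> 1"
  shows "Cw k n v = geom (Xg k cR) n v"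
proof (induction v arbitrary: n rule: measure_induct_rule[of length])
  case (less v)
  show ?case
  proof (cases "in_h1 v")
    case False
    have "Cw k n v = 0" using False by (simp add: Cw_def harm_nonh1)
    moreover have "geom (Xg k cR) n v = 0" using geom_nz[of k cR, OF k cR0] False by blast
    ultimately show ?thesis by simp
  next
    case True
    show ?thesis
    proof (cases "v = []")
      case True
      have "Cw k n [] = (\<Sum>i\<le>n. Aw k i [] * Bw k (n - i) [])"
        unfolding Cw_def using harm_Nil[OF fA fB hA[OF k] hB] k by simp
      also have "\<dots> = (\<Sum>i\<le>n. if i = 0 then (if n = 0 then 1 else 0) else 0)"
        using k by (intro sum.cong refl) (auto simp: A_Nil B_Nil)
      also have "\<dots> = (if n = 0 then 1 else 0)" by simp
      finally show ?thesis using True geom_Nil[of k cR, OF k cR0] by simp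
    next
      case False
      then obtain j v' where jv: "j \<ge> 1" "v = zw j @ v'" "in_h1 v'" using h1_decomp \<open>in_h1 v\<close> by blast
      have "length v' < length v" using jv(2) by simp
      then have IH: "Cw k m v' = geom (Xg k cR) m v'" for m using less by blast
      show ?thesis unfolding jv(2) C_res[OF k jv(1)] geom_res[of k cR, OF k cR0 jv(1)] IH ..
    qed
  qed
qed

theorem proposition4p8:
  fixes k :: nat
  assumes "k \<ge> 1"
  shows "harm_s (S_ts (geom (zu 1 k))) (geom (zu (-1) k)) = geom (Xrhs k)"
proof (intro ext)
  fix n v
  have A: "S_ts (geom (zu 1 k)) = Aw k" by (intro ext) (simp add: S_ts_def geom_zu S_t_wsingle Aw_def)
  have B: "geom (zu (-1) k) = Bw k" by (intro ext) (simp add: geom_zu Bw_def)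
  show "harm_s (S_ts (geom (zu 1 k))) (geom (zu (-1) k)) n v = geom (Xrhs k) n v"
    unfolding A B Xrhs_Xg harm_s_def main_eq[OF assms, symmetric] Cw_def ..
qed



end
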